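(* Let $m,n,w,d$ be positive integers with $1\le w\le m-1$. For all positive integers $l$ dividing $n$, all integers $0\le v\le l$, and all integers $\delta$ with $0\le \delta\le \frac{n}{l}\min\{v,l-v\}$, $$A(m,n,w,d)\le \frac{1}{\alpha\left(l,\frac{n}{l},v,\delta\right)}\left(\frac{m^l}{w^v(m-w)^{l-v}}\right)^{\frac{n}{l}} A\left((m-1)l,\frac{n}{l},lw-v,d-\delta\right).$$
   Context: $J(m,w)$ denotes the set of binary vectors of length $m$ and Hamming weight $w$. Elements of $J(m,w)^n$ are identified with $m\times n$ binary matrices all of whose columns have weight $w$, with distance the binary Hamming distance. $A(m,n,w,d)$ denotes the maximum cardinality of a nonempty subset of $J(m,w)^n$ in which any two distinct elements are at Hamming distance at least $2d$ (for $d\le 0$ this is just $\binom{m}{w}^n$). $\alpha(m,n,w,\delta)$ denotes the maximum cardinality of a subset of $J(m,w)^n$ in which any two elements are at Hamming distance at most $2\delta$ (so $\alpha(m,n,w,0)=1$ and $\alpha(m,n,w,nw)=\binom{m}{w}^n$). *)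

theory Defs
  imports Complex_Main
begin

text \<open>Elements of J(m,w)^n: m x n binary matrices (entries indexed by row i < m and
column j < n, zero outside) all of whose columns have Hamming weight w.\<close>
definition cw_mats :: "nat \<Rightarrow> nat \<Rightarrow> nat \<Rightarrow> (nat \<Rightarrow> nat \<Rightarrow> bool) set" where
  "cw_mats m n w = {M. (\<forall>i j. M i j \<longrightarrow> i < m \<and> j < n) \<and>
                        (\<forall>j<n. card {i. i < m \<and> M i j} = w)}"

definition mat_hdist :: "nat \<Rightarrow> nat \<Rightarrow> (nat \<Rightarrow> nat \<Rightarrow> bool) \<Rightarrow> (nat \<Rightarrow> nat \<Rightarrow> bool) \<Rightarrow> nat" where
  "mat_hdist m n M N = card {(i, j). i < m \<and> j < n \<and> M i j \<noteq> N i j}"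

definition A_code :: "nat \<Rightarrow> nat \<Rightarrow> nat \<Rightarrow> int \<Rightarrow> nat" where
  "A_code m n w d = Max {card C | C. C \<subseteq> cw_mats m n w \<and> C \<noteq> {} \<and>
      (\<forall>x\<in>C. \<forall>y\<in>C. x \<noteq> y \<longrightarrow> 2 * d \<le> int (mat_hdist m n x y))}"

definition alpha_anticode :: "nat \<Rightarrow> nat \<Rightarrow> nat \<Rightarrow> nat \<Rightarrow> nat" where
  "alpha_anticode m n w \<delta> = Max {card C | C. C \<subseteq> cw_mats m n w \<and>
      (\<forall>x\<in>C. \<forall>y\<in>C. mat_hdist m n x y \<le> 2 * \<delta>)}"

end

theory Submission
  imports Defs "HOL-Library.FuncSet"
begin


lemma finite_cw: "finite (cw_mats m n w)"
proof -
  have "cw_mats m n w \<subseteq> (\<lambda>S i j. (i,j) \<in> S) ` Pow ({..<m}\<times>{..<n})"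
  proof
    fix M assume "M \<in> cw_mats m n w"
    hence "M = (\<lambda>i j. (i,j) \<in> {(i,j). M i j})" and "{(i,j). M i j} \<subseteq> {..<m}\<times>{..<n}"
      by (auto simp: cw_mats_def)
    thus "M \<in> (\<lambda>S i j. (i,j) \<in> S) ` Pow ({..<m}\<times>{..<n})" by blast
  qed
  thus ?thesis by (rule finite_subset) auto
qed

definition sk :: "nat \<Rightarrow> nat \<Rightarrow> nat" where
  "sk p s = (if s < p then s else Suc s)"

lemma sk_inj: "inj (sk p)"
  by (auto simp: inj_def sk_def split: if_splits)

lemma col_split:
  assumes "p < m"
  shows "card {i. i < m \<and> x i} = card {s. s < m - 1 \<and> x (sk p s)} + (if x p then 1 else 0)"
proof -
  have e: "{i. i < m \<and> x i} = sk p ` {s. s < m - 1 \<and> x (sk p s)} \<union> (if x p then {p} else {})"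
  proof (rule set_eqI, rule iffI)
    fix i assume "i \<in> {i. i < m \<and> x i}"
    hence i: "i < m" "x i" by auto
    show "i \<in> sk p ` {s. s < m - 1 \<and> x (sk p s)} \<union> (if x p then {p} else {})"
    proof (cases "i = p")
      case True thus ?thesis using i by auto
    next
      case False
      define s where "s = (if i < p then i else i - 1)"
      have "sk p s = i" "s < m - 1" using False assms i by (auto simp: s_def sk_def)
      thus ?thesis using i by force
    qed
  next
    fix i assume "i \<in> sk p ` {s. s < m - 1 \<and> x (sk p s)} \<union> (if x p then {p} else {})"
    thus "i \<in> {i. i < m \<and> x i}" using assms by (auto simp: sk_def split: if_splits)
  qed
  have d: "sk p ` {s. s < m - 1 \<and> x (sk p s)} \<inter> {p} = {}" by (auto simp: sk_def)
  have "card (sk p ` {s. s < m - 1 \<and> x (sk p s)}) = card {s. s < m - 1 \<and> x (sk p s)}"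
    by (rule card_image) (meson inj_on_subset sk_inj subset_UNIV)
  thus ?thesis unfolding e using d by (auto simp: card_Un_disjoint)
qed

lemma card_split_div:
  fixes a l :: nat
  assumes "0 < a"
  shows "card {r. r < a * l \<and> Q (r div a) (r mod a)} = (\<Sum>t<l. card {s. s < a \<and> Q t s})"
proof -
  have "{r. r < a * l \<and> Q (r div a) (r mod a)} = (\<lambda>(t,s). t*a+s) ` Sigma {..<l} (\<lambda>t. {s. s < a \<and> Q t s})"
  proof (rule set_eqI, rule iffI)
    fix r assume "r \<in> {r. r < a * l \<and> Q (r div a) (r mod a)}"
    hence "r div a < l" "r mod a < a" "Q (r div a) (r mod a)" "r = (r div a)*a + r mod a"
      using assms by (auto simp: less_mult_imp_div_less mult.commute)
    thus "r \<in> (\<lambda>(t,s). t*a+s) ` Sigma {..<l} (\<lambda>t. {s. s < a \<and> Q t s})" by force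
  next
    fix r assume "r \<in> (\<lambda>(t,s). t*a+s) ` Sigma {..<l} (\<lambda>t. {s. s < a \<and> Q t s})"
    then obtain t s where "r = t*a+s" "t < l" "s < a" "Q t s" by auto
    moreover have "t*a+s < a*l"
    proof -
      have "t*a + s < (t+1)*a" using \<open>s<a\<close> by simp
      also have "(t+1)*a \<le> l*a" using \<open>t<l\<close> by (intro mult_le_mono1) simp
      finally show ?thesis by (simp add: mult.commute)
    qed
    ultimately show "r \<in> {r. r < a * l \<and> Q (r div a) (r mod a)}" by auto
  qed
  moreover have "inj_on (\<lambda>(t,s). t*a+s) (Sigma {..<l} (\<lambda>t. {s. s < a \<and> Q t s}))"
  proof (rule inj_onI, clarify)
    fix t s t' s' assume "t*a+s = t'*a+s'" "s<a" "s'<a"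
    hence "(t*a+s) div a = (t'*a+s') div a" "(t*a+s) mod a = (t'*a+s') mod a" by simp_all
    thus "t = t' \<and> s = s'" using \<open>s<a\<close> \<open>s'<a\<close> by simp
  qed
  ultimately show ?thesis
    by (simp add: card_image)
qed
lemma idx_lt: fixes c t k l :: nat assumes "c < k" "t < l" shows "c*l+t < k*l"
proof -
  have "c*l + t < (c+1)*l" using assms by simp
  also have "(c+1)*l \<le> k*l" using assms by (intro mult_le_mono1) simp
  finally show ?thesis .
qed

definition pat :: "nat \<Rightarrow> nat \<Rightarrow> (nat \<Rightarrow> nat) \<Rightarrow> (nat \<Rightarrow> nat \<Rightarrow> bool) \<Rightarrow> nat \<Rightarrow> nat \<Rightarrow> bool" where
  "pat l k P x = (\<lambda>t c. t < l \<and> c < k \<and> x (P (c*l+t)) (c*l+t))"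

definition red :: "nat \<Rightarrow> nat \<Rightarrow> nat \<Rightarrow> (nat \<Rightarrow> nat) \<Rightarrow> (nat \<Rightarrow> nat \<Rightarrow> bool) \<Rightarrow> nat \<Rightarrow> nat \<Rightarrow> bool" where
  "red m l k P x = (\<lambda>r c. r < (m-1)*l \<and> c < k \<and>
      x (sk (P (c*l + r div (m-1))) (r mod (m-1))) (c*l + r div (m-1)))"

lemma red_cw:
  assumes x: "x \<in> cw_mats m n w" and n: "n = k*l" and m: "1 < m"
    and P: "\<forall>j<n. P j < m" and pb: "pat l k P x \<in> cw_mats l k v"
  shows "red m l k P x \<in> cw_mats ((m-1)*l) k (l*w - v)"
  unfolding cw_mats_def mem_Collect_eq
proof (rule conjI)
  show "\<forall>i j. red m l k P x i j \<longrightarrow> i < (m-1)*l \<and> j < k" by (simp add: red_def)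
next
  show "\<forall>c<k. card {i. i < (m-1)*l \<and> red m l k P x i c} = l*w - v"
  proof (intro allI impI)
  fix c assume c: "c < k"
  define Q where "Q = (\<lambda>t s. x (sk (P (c*l+t)) s) (c*l+t))"
  have "{i. i < (m-1)*l \<and> red m l k P x i c} = {r. r < (m-1)*l \<and> Q (r div (m-1)) (r mod (m-1))}"
    using c by (auto simp: red_def Q_def)
  also have "card \<dots> = (\<Sum>t<l. card {s. s < m-1 \<and> Q t s})"
    by (rule card_split_div) (use m in simp)
  finally have e1: "card {i. i < (m-1)*l \<and> red m l k P x i c} = (\<Sum>t<l. card {s. s < m-1 \<and> Q t s})" .
  have e2: "card {s. s < m-1 \<and> Q t s} + (if x (P (c*l+t)) (c*l+t) then 1 else 0) = w" if t: "t < l" for t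
  proof -
    have j: "c*l+t < n" using idx_lt[OF c t] n by simp
    have "w = card {i. i < m \<and> x i (c*l+t)}" using x j by (simp add: cw_mats_def)
    also have "\<dots> = card {s. s < m-1 \<and> Q t s} + (if x (P (c*l+t)) (c*l+t) then 1 else 0)"
      unfolding Q_def by (rule col_split) (use P j in simp)
    finally show ?thesis by simp
  qed
  have e3: "(\<Sum>t<l. (if x (P (c*l+t)) (c*l+t) then 1 else 0)) = v"
  proof -
    have "(\<Sum>t<l. (if x (P (c*l+t)) (c*l+t) then 1 else 0)) = card {t. t < l \<and> pat l k P x t c}"
      using c by (simp add: sum.If_cases pat_def Int_def conj_commute)
    also have "\<dots> = v" using pb c by (simp add: cw_mats_def)
    finally show ?thesis .
  qed
  have "(\<Sum>t<l. card {s. s < m-1 \<and> Q t s}) + (\<Sum>t<l. (if x (P (c*l+t)) (c*l+t) then 1 else 0)) = l*w"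
    using e2 by (simp add: sum.distrib[symmetric])
  thus "card {i. i < (m-1)*l \<and> red m l k P x i c} = l*w - v" using e1 e3 by simp
  qed
qed
lemma idx_inj: fixes c t c' t' l :: nat assumes "c*l+t = c'*l+t'" "t < l" "t' < l" shows "c = c' \<and> t = t'"
proof -
  have l: "0 < l" using assms by simp
  have 1: "(c*l+t) div l = (c'*l+t') div l" using assms(1) by (rule arg_cong)
  have 2: "(c*l+t) mod l = (c'*l+t') mod l" using assms(1) by (rule arg_cong)
  from 1 2 l assms(2,3) show ?thesis by simp
qed

lemma idx_dec: fixes j k l :: nat assumes "j < k*l" shows "j = (j div l)*l + j mod l" "j div l < k" "j mod l < l"
proof -
  have l: "0 < l" using assms by (cases l) auto
  show "j = (j div l)*l + j mod l" by simp
  show "j div l < k" using assms by (simp add: less_mult_imp_div_less)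
  show "j mod l < l" using l by simp
qed

lemma dist_split:
  assumes n: "n = k*l" and m: "1 < m" and P: "\<forall>j<n. P j < m"
  shows "mat_hdist m n x y = mat_hdist ((m-1)*l) k (red m l k P x) (red m l k P y) + mat_hdist l k (pat l k P x) (pat l k P y)"
proof -
  define a where "a = m - 1"
  have a: "0 < a" using m by (simp add: a_def)
  define D1 where "D1 = {(i,j). i < m \<and> j < n \<and> x i j \<noteq> y i j \<and> i \<noteq> P j}"
  define D2 where "D2 = {(i,j). i < m \<and> j < n \<and> x i j \<noteq> y i j \<and> i = P j}"
  define R where "R = {(r,c). r < (m-1)*l \<and> c < k \<and> red m l k P x r c \<noteq> red m l k P y r c}"
  define T where "T = {(t,c). t < l \<and> c < k \<and> pat l k P x t c \<noteq> pat l k P y t c}"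
  define g1 where "g1 = (\<lambda>(r,c). (sk (P (c*l + r div a)) (r mod a), c*l + r div a))"
  define g2 where "g2 = (\<lambda>(t::nat,c::nat). (P (c*l+t), c*l+t))"
  have fin: "finite D1" "finite D2"
    by (rule finite_subset[of _ "{..<m}\<times>{..<n}"], auto simp: D1_def D2_def)+
  have u: "{(i, j). i < m \<and> j < n \<and> x i j \<noteq> y i j} = D1 \<union> D2" by (auto simp: D1_def D2_def)
  have disj: "D1 \<inter> D2 = {}" by (auto simp: D1_def D2_def)
  have "mat_hdist m n x y = card D1 + card D2"
    unfolding mat_hdist_def u by (rule card_Un_disjoint[OF fin disj])
  moreover have "card D2 = card T"
  proof -
    have "inj_on g2 T"
      by (rule inj_onI) (auto simp: g2_def T_def dest: idx_inj)
    moreover have "g2 ` T = D2"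
    proof (rule set_eqI, rule iffI)
      fix z assume "z \<in> g2 ` T"
      then obtain t c where z: "z = (P (c*l+t), c*l+t)" "t < l" "c < k" "pat l k P x t c \<noteq> pat l k P y t c"
        by (auto simp: g2_def T_def)
      have "c*l+t < n" using idx_lt[OF z(3,2)] n by simp
      thus "z \<in> D2" using z P by (auto simp: D2_def pat_def)
    next
      fix z assume "z \<in> D2"
      then obtain i j where z: "z = (i,j)" "i < m" "j < n" "x i j \<noteq> y i j" "i = P j" by (auto simp: D2_def)
      note dc = idx_dec[of j k l, OF z(3)[unfolded n]]
      have "(j mod l, j div l) \<in> T" using z dc by (auto simp: T_def pat_def)
      moreover have "g2 (j mod l, j div l) = z" using z dc by (simp add: g2_def)
      ultimately show "z \<in> g2 ` T" by force
    qed
    ultimately show ?thesis by (metis card_image)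
  qed
  moreover have "card D1 = card R"
  proof -
    have "inj_on g1 R"
    proof (rule inj_onI, clarify)
      fix r c r' c' assume r: "(r,c) \<in> R" "(r',c') \<in> R" and e: "g1 (r,c) = g1 (r',c')"
      have "r < l*a" "r' < l*a" using r by (auto simp: R_def a_def mult.commute)
      hence lt: "r div a < l" "r' div a < l" by (simp_all add: less_mult_imp_div_less)
      have "c*l + r div a = c'*l + r' div a" using e by (simp add: g1_def)
      hence cc: "c = c'" "r div a = r' div a" using idx_inj lt by blast+
      hence "sk (P (c*l + r div a)) (r mod a) = sk (P (c*l + r div a)) (r' mod a)" using e by (simp add: g1_def)
      hence "r mod a = r' mod a" using sk_inj by (meson injD)
      thus "r = r' \<and> c = c'" using cc by (metis div_mult_mod_eq)
    qed
    moreover have "g1 ` R = D1"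
    proof (rule set_eqI, rule iffI)
      fix z assume "z \<in> g1 ` R"
      then obtain r c where z: "z = g1 (r,c)" "r < a*l" "c < k" "red m l k P x r c \<noteq> red m l k P y r c"
        by (auto simp: R_def a_def)
      have "r < l*a" using z by (simp add: mult.commute)
      hence lt: "r div a < l" by (simp add: less_mult_imp_div_less)
      have j: "c*l + r div a < n" using idx_lt[OF z(3) lt] n by simp
      have p: "P (c*l + r div a) < m" using P j by simp
      have s: "r mod a < a" using a by simp
      have "sk (P (c*l + r div a)) (r mod a) < m" "sk (P (c*l + r div a)) (r mod a) \<noteq> P (c*l + r div a)"
        using p s by (auto simp: sk_def a_def)
      thus "z \<in> D1" using z j by (auto simp: D1_def g1_def red_def a_def)
    next
      fix z assume "z \<in> D1"
      then obtain i j where z: "z = (i,j)" "i < m" "j < n" "x i j \<noteq> y i j" "i \<noteq> P j" by (auto simp: D1_def)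
      note dc = idx_dec[of j k l, OF z(3)[unfolded n]]
      define s where "s = (if i < P j then i else i - 1)"
      have p: "P j < m" using P z by simp
      have s: "s < a" "sk (P j) s = i" using z p by (auto simp: s_def a_def sk_def)
      define r where "r = (j mod l)*a + s"
      have rd: "r div a = j mod l" "r mod a = s" using s a by (simp_all add: r_def)
      have "r < a*l"
      proof -
        have "r < (j mod l + 1)*a" using s by (simp add: r_def)
        also have "\<dots> \<le> l*a" using dc by (intro mult_le_mono1) simp
        finally show ?thesis by (simp add: mult.commute)
      qed
      hence "(r, j div l) \<in> R" using z dc rd s by (auto simp: R_def red_def a_def)
      moreover have "g1 (r, j div l) = z" using z dc rd s by (simp add: g1_def)
      ultimately show "z \<in> g1 ` R" by force
    qed
    ultimately show ?thesis by (metis card_image)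
  qed
  moreover have "mat_hdist ((m-1)*l) k (red m l k P x) (red m l k P y) = card R"
    unfolding mat_hdist_def R_def ..
  moreover have "mat_hdist l k (pat l k P x) (pat l k P y) = card T"
    unfolding mat_hdist_def T_def ..
  ultimately show ?thesis by simp
qed


lemma hdist0:
  assumes "x \<in> cw_mats m n w" "y \<in> cw_mats m n w'" "mat_hdist m n x y = 0"
  shows "x = y"
proof -
  have fin: "finite {(i, j). i < m \<and> j < n \<and> x i j \<noteq> y i j}"
    by (rule finite_subset[of _ "{..<m}\<times>{..<n}"]) auto
  hence e: "{(i, j). i < m \<and> j < n \<and> x i j \<noteq> y i j} = {}" using assms(3) by (simp add: mat_hdist_def)
  show ?thesis
  proof (intro ext)
    fix i j show "x i j = y i j"
    proof (cases "i < m \<and> j < n")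
      case True thus ?thesis using e by auto
    next
      case False thus ?thesis using assms(1,2) by (auto simp: cw_mats_def)
    qed
  qed
qed

lemma red_entry:
  assumes "t < l" "c < k" "s < m - 1"
  shows "red m l k P x (t*(m-1)+s) c = x (sk (P (c*l+t)) s) (c*l+t)"
proof -
  have a: "0 < m - 1" using assms by simp
  have "t*(m-1)+s < (t+1)*(m-1)" using assms by simp
  also have "\<dots> \<le> l*(m-1)" using assms by (intro mult_le_mono1) simp
  finally have "t*(m-1)+s < (m-1)*l" by (simp add: mult.commute)
  moreover have "(t*(m-1)+s) div (m-1) = t" "(t*(m-1)+s) mod (m-1) = s" using assms a by simp_all
  ultimately show ?thesis using assms by (simp add: red_def)
qed

lemma red_inj:
  assumes x: "x \<in> cw_mats m n w" and y: "y \<in> cw_mats m n w" and n: "n = k*l" and m: "1 < m"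
    and P: "\<forall>j<n. P j < m" and e: "red m l k P x = red m l k P y"
  shows "x = y"
proof -
  have "pat l k P x = pat l k P y"
  proof (intro ext)
    fix t c show "pat l k P x t c = pat l k P y t c"
    proof (cases "t < l \<and> c < k")
      case False thus ?thesis by (auto simp: pat_def)
    next
      case True
      define j where "j = c*l+t"
      have j: "j < n" using idx_lt[of c k t l] True n by (simp add: j_def)
      have xy: "x (sk (P j) s) j = y (sk (P j) s) j" if s: "s < m-1" for s
      proof -
        have "x (sk (P j) s) j = red m l k P x (t*(m-1)+s) c"
          using red_entry[of t l c k s m P x] True s by (simp add: j_def)
        also have "\<dots> = red m l k P y (t*(m-1)+s) c" using e by simp
        also have "\<dots> = y (sk (P j) s) j"
          using red_entry[of t l c k s m P y] True s by (simp add: j_def)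
        finally show ?thesis .
      qed
      have hs: "{s. s < m-1 \<and> x (sk (P j) s) j} = {s. s < m-1 \<and> y (sk (P j) s) j}"
        using xy by blast
      have h1: "w = card {s. s < m-1 \<and> x (sk (P j) s) j} + (if x (P j) j then 1 else 0)"
        using col_split[of "P j" m "\<lambda>i. x i j"] P j x by (simp add: cw_mats_def)
      have h2: "w = card {s. s < m-1 \<and> y (sk (P j) s) j} + (if y (P j) j then 1 else 0)"
        using col_split[of "P j" m "\<lambda>i. y i j"] P j y by (simp add: cw_mats_def)
      have "x (P j) j = y (P j) j"
      proof (rule ccontr)
        assume "x (P j) j \<noteq> y (P j) j"
        thus False using h1 h2 unfolding hs by (cases "x (P j) j") simp_all
      qed
      thus ?thesis using True by (simp add: pat_def j_def)
    qed
  qed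
  moreover have "mat_hdist ((m-1)*l) k (red m l k P x) (red m l k P y) = 0"
    unfolding e mat_hdist_def by simp
  moreover have "mat_hdist l k (pat l k P y) (pat l k P y) = 0"
    unfolding mat_hdist_def by simp
  ultimately have "mat_hdist m n x y = 0" using dist_split[OF n m P, of x y] by simp
  thus ?thesis using hdist0 x y by blast
qed

lemma cw_nonempty: assumes "w \<le> m" shows "(\<lambda>i j. i < w \<and> j < n) \<in> cw_mats m n w"
proof -
  have "\<And>j. j < n \<Longrightarrow> {i. i < m \<and> i < w \<and> j < n} = {..<w}" using assms by auto
  thus ?thesis using assms unfolding cw_mats_def by auto
qed

lemma fin_cards: "finite X \<Longrightarrow> finite {card C | C. C \<subseteq> X \<and> Q C}"
  by (rule finite_subset[of _ "card ` Pow X"]) auto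

lemma count_P:
  assumes x: "x \<in> cw_mats m n w" and b: "b \<in> cw_mats l k v" and n: "n = k*l" and l: "0 < l"
    and wm: "w \<le> m"
  shows "card {P \<in> {..<n} \<rightarrow>\<^sub>E {..<m}. pat l k P x = b} = w^(k*v) * (m-w)^(k*(l-v))"
proof -
  define \<beta> where "\<beta> = (\<lambda>j. b (j mod l) (j div l))"
  have s1: "{P \<in> {..<n} \<rightarrow>\<^sub>E {..<m}. pat l k P x = b} = (\<Pi>\<^sub>E j\<in>{..<n}. {p. p < m \<and> x p j = \<beta> j})"
  proof (rule set_eqI, rule iffI)
    fix P assume "P \<in> {P \<in> {..<n} \<rightarrow>\<^sub>E {..<m}. pat l k P x = b}"
    hence P: "P \<in> {..<n} \<rightarrow>\<^sub>E {..<m}" and e: "pat l k P x = b" by auto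
    have "x (P j) j = \<beta> j" if j: "j < n" for j
    proof -
      note dc = idx_dec[of j k l, OF j[unfolded n]]
      have "pat l k P x (j mod l) (j div l) = b (j mod l) (j div l)" using e by simp
      thus ?thesis using dc by (simp add: pat_def \<beta>_def)
    qed
    thus "P \<in> (\<Pi>\<^sub>E j\<in>{..<n}. {p. p < m \<and> x p j = \<beta> j})" using P by (auto simp: PiE_iff)
  next
    fix P assume P: "P \<in> (\<Pi>\<^sub>E j\<in>{..<n}. {p. p < m \<and> x p j = \<beta> j})"
    have "P \<in> {..<n} \<rightarrow>\<^sub>E {..<m}" using P by (auto simp: PiE_iff)
    moreover have "pat l k P x = b"
    proof (intro ext)
      fix t c show "pat l k P x t c = b t c"
      proof (cases "t < l \<and> c < k")
        case True
        have j: "c*l+t < n" using idx_lt[of c k t l] True n by simp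
        have "(c*l+t) mod l = t" "(c*l+t) div l = c" using True by simp_all
        thus ?thesis using P j True by (auto simp: PiE_iff pat_def \<beta>_def)
      next
        case False thus ?thesis using b by (auto simp: pat_def cw_mats_def)
      qed
    qed
    ultimately show "P \<in> {P \<in> {..<n} \<rightarrow>\<^sub>E {..<m}. pat l k P x = b}" by simp
  qed
  have s3: "card {p. p < m \<and> x p j = \<beta> j} = (if \<beta> j then w else m - w)" if j: "j < n" for j
  proof -
    have cw: "card {p. p < m \<and> x p j} = w" using x j by (simp add: cw_mats_def)
    show ?thesis
    proof (cases "\<beta> j")
      case True thus ?thesis using cw by simp
    next
      case False
      have "{p. p < m \<and> x p j = \<beta> j} = {..<m} - {p. p < m \<and> x p j}" using False by auto
      moreover have "card ({..<m} - {p. p < m \<and> x p j}) = m - w"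
        using cw by (subst card_Diff_subset) auto
      ultimately show ?thesis using False by simp
    qed
  qed
  have "card {P \<in> {..<n} \<rightarrow>\<^sub>E {..<m}. pat l k P x = b} = (\<Prod>j<n. card {p. p < m \<and> x p j = \<beta> j})"
    unfolding s1 by (rule card_PiE) simp
  also have "\<dots> = (\<Prod>j<n. if \<beta> j then w else m - w)"
    by (rule prod.cong) (simp_all add: s3)
  also have "\<dots> = w ^ card ({..<n} \<inter> {j. \<beta> j}) * (m-w) ^ card ({..<n} \<inter> - {j. \<beta> j})"
    by (simp add: prod.If_cases)
  also have "card ({..<n} \<inter> {j. \<beta> j}) = k*v"
  proof -
    have "{..<n} \<inter> {j. \<beta> j} = {r. r < l*k \<and> (\<lambda>c t. b t c) (r div l) (r mod l)}"
      using n by (auto simp: \<beta>_def mult.commute)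
    also have "card \<dots> = (\<Sum>c<k. card {t. t < l \<and> b t c})"
      by (rule card_split_div[OF l])
    also have "\<dots> = (\<Sum>c<k. v)" using b by (intro sum.cong) (auto simp: cw_mats_def)
    finally show ?thesis by simp
  qed
  also have "card ({..<n} \<inter> - {j. \<beta> j}) = k*(l-v)"
  proof -
    have "{..<n} \<inter> - {j. \<beta> j} = {..<n} - ({..<n} \<inter> {j. \<beta> j})" by auto
    hence "card ({..<n} \<inter> - {j. \<beta> j}) = n - card ({..<n} \<inter> {j. \<beta> j})"
      by (simp add: card_Diff_subset)
    thus ?thesis using \<open>card ({..<n} \<inter> {j. \<beta> j}) = k*v\<close> n by (simp add: diff_mult_distrib2 mult.commute)
  qed
  finally show ?thesis .
qed

lemma per_P:
  assumes C: "C \<subseteq> cw_mats m n w" and Cd: "\<forall>x\<in>C. \<forall>y\<in>C. x \<noteq> y \<longrightarrow> 2 * int d \<le> int (mat_hdist m n x y)"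
    and B: "B \<subseteq> cw_mats l k v" and Bd: "\<forall>x\<in>B. \<forall>y\<in>B. mat_hdist l k x y \<le> 2 * \<delta>"
    and n: "n = k*l" and m: "1 < m" and P: "P \<in> {..<n} \<rightarrow>\<^sub>E {..<m}"
  shows "card {x\<in>C. pat l k P x \<in> B} \<le> A_code ((m-1)*l) k (l*w - v) (int d - int \<delta>)"
proof (cases "{x\<in>C. pat l k P x \<in> B} = {}")
  case True thus ?thesis by (simp only: card.empty zero_le)
next
  case False
  define S where "S = {x\<in>C. pat l k P x \<in> B}"
  have P': "\<forall>j<n. P j < m" using P by (auto simp: PiE_iff)
  have inj: "inj_on (red m l k P) S"
  proof (rule inj_onI)
    fix x y assume "x \<in> S" "y \<in> S" "red m l k P x = red m l k P y"
    thus "x = y" using red_inj[OF _ _ n m P'] C by (auto simp: S_def)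
  qed
  have sub: "red m l k P ` S \<subseteq> cw_mats ((m-1)*l) k (l*w - v)"
  proof
    fix u assume "u \<in> red m l k P ` S"
    then obtain x where "x \<in> C" "pat l k P x \<in> B" "u = red m l k P x" by (auto simp: S_def)
    thus "u \<in> cw_mats ((m-1)*l) k (l*w - v)" using red_cw[OF _ n m P', of x w v] C B by blast
  qed
  have ne: "red m l k P ` S \<noteq> {}" using False by (simp add: S_def)
  have dd: "\<forall>u\<in>red m l k P ` S. \<forall>u'\<in>red m l k P ` S. u \<noteq> u' \<longrightarrow>
      2 * (int d - int \<delta>) \<le> int (mat_hdist ((m-1)*l) k u u')"
  proof (intro ballI impI)
    fix u u' assume "u \<in> red m l k P ` S" "u' \<in> red m l k P ` S" "u \<noteq> u'"
    then obtain x y where xy: "x \<in> S" "y \<in> S" "u = red m l k P x" "u' = red m l k P y" "x \<noteq> y" by auto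
    have "2 * int d \<le> int (mat_hdist m n x y)" using Cd xy by (auto simp: S_def)
    moreover have "mat_hdist l k (pat l k P x) (pat l k P y) \<le> 2 * \<delta>" using Bd xy by (auto simp: S_def)
    moreover note dist_split[OF n m P', of x y]
    ultimately show "2 * (int d - int \<delta>) \<le> int (mat_hdist ((m-1)*l) k u u')" using xy by simp
  qed
  have "card S = card (red m l k P ` S)" using inj by (simp add: card_image)
  also have "\<dots> \<le> A_code ((m-1)*l) k (l*w - v) (int d - int \<delta>)"
    unfolding A_code_def
    by (rule Max_ge, rule fin_cards[OF finite_cw]) (use sub ne dd in blast)
  finally show ?thesis by (simp add: S_def)
qed

lemma card_filter_sum: "finite C \<Longrightarrow> card {x\<in>C. Q x} = (\<Sum>x\<in>C. if Q x then 1 else 0::nat)"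
  using sum.inter_filter[of C "\<lambda>_. 1::nat" Q] by simp

theorem proposition3:
  fixes m n w d l v \<delta> :: nat
  assumes "0 < m" "0 < n" "0 < d" "1 \<le> w" "w \<le> m - 1"
    and "0 < l" "l dvd n" "v \<le> l"
    and "\<delta> \<le> (n div l) * min v (l - v)"
  shows "real (A_code m n w (int d)) \<le>
     (1 / real (alpha_anticode l (n div l) v \<delta>)) *
     (real m ^ l / (real w ^ v * real (m - w) ^ (l - v))) ^ (n div l) *
     real (A_code ((m - 1) * l) (n div l) (l * w - v) (int d - int \<delta>))"
proof -
  define k where "k = n div l"
  have n: "n = k*l" using assms(7) by (simp add: k_def)
  have m: "1 < m" and wm: "w \<le> m" "w < m" using assms(4,5) by auto
  have l: "0 < l" by fact
  define At where "At = A_code ((m - 1) * l) k (l * w - v) (int d - int \<delta>)"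
  define CS where "CS = {card C | C. C \<subseteq> cw_mats m n w \<and> C \<noteq> {} \<and>
      (\<forall>x\<in>C. \<forall>y\<in>C. x \<noteq> y \<longrightarrow> 2 * int d \<le> int (mat_hdist m n x y))}"
  define BS where "BS = {card C | C. C \<subseteq> cw_mats l k v \<and>
      (\<forall>x\<in>C. \<forall>y\<in>C. mat_hdist l k x y \<le> 2 * \<delta>)}"
  have finCS: "finite CS" unfolding CS_def by (rule fin_cards[OF finite_cw])
  have finBS: "finite BS" unfolding BS_def by (rule fin_cards[OF finite_cw])
  have "card {(\<lambda>i j. i < w \<and> j < n)} \<in> CS" unfolding CS_def
    using cw_nonempty[OF wm(1), of n] by blast
  hence "CS \<noteq> {}" by blast
  hence "A_code m n w (int d) \<in> CS" unfolding A_code_def CS_def[symmetric] using finCS by (rule Max_in[rotated])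
  then obtain C where C: "A_code m n w (int d) = card C" "C \<subseteq> cw_mats m n w"
    "\<forall>x\<in>C. \<forall>y\<in>C. x \<noteq> y \<longrightarrow> 2 * int d \<le> int (mat_hdist m n x y)" unfolding CS_def by blast
  have one: "card {(\<lambda>i j. i < v \<and> j < k)} \<in> BS"
  proof -
    let ?M = "(\<lambda>i j. i < v \<and> j < k)"
    have "mat_hdist l k ?M ?M \<le> 2 * \<delta>" by (simp add: mat_hdist_def)
    hence "{?M} \<subseteq> cw_mats l k v \<and> (\<forall>x\<in>{?M}. \<forall>y\<in>{?M}. mat_hdist l k x y \<le> 2 * \<delta>)"
      using cw_nonempty[OF assms(8), of k] by simp
    thus ?thesis unfolding BS_def by blast
  qed
  hence "BS \<noteq> {}" by blast
  hence "alpha_anticode l k v \<delta> \<in> BS" unfolding alpha_anticode_def BS_def[symmetric] using finBS by (rule Max_in[rotated])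
  then obtain B where B: "alpha_anticode l k v \<delta> = card B" "B \<subseteq> cw_mats l k v"
    "\<forall>x\<in>B. \<forall>y\<in>B. mat_hdist l k x y \<le> 2 * \<delta>" unfolding BS_def by blast
  have "1 \<le> alpha_anticode l k v \<delta>" unfolding alpha_anticode_def BS_def[symmetric]
    using Max_ge[OF finBS one] by simp
  hence alpha: "1 \<le> card B" using B by simp
  have finC: "finite C" using C(2) finite_cw finite_subset by blast
  have finB: "finite B" using B(2) finite_cw finite_subset by blast
  define Ps where "Ps = {..<n} \<rightarrow>\<^sub>E {..<m}"
  have finPs: "finite Ps" unfolding Ps_def by (simp add: finite_PiE)
  define W where "W = w^(k*v) * (m-w)^(k*(l-v))"
  have "(\<Sum>P\<in>Ps. card {x\<in>C. pat l k P x \<in> B}) = (\<Sum>P\<in>Ps. \<Sum>x\<in>C. \<Sum>b\<in>B. if pat l k P x = b then 1 else 0)"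
    using finC finB by (simp add: card_filter_sum)
  also have "\<dots> = (\<Sum>x\<in>C. \<Sum>b\<in>B. \<Sum>P\<in>Ps. if pat l k P x = b then 1 else 0)"
    by (simp add: sum.swap[of _ Ps] sum.swap[of _ Ps B])
  also have "\<dots> = (\<Sum>x\<in>C. \<Sum>b\<in>B. W)"
  proof (intro sum.cong refl)
    fix x b assume "x \<in> C" "b \<in> B"
    hence "card {P\<in>Ps. pat l k P x = b} = W"
      unfolding Ps_def W_def using count_P[of x m n w b l k v] C B n l wm by blast
    thus "(\<Sum>P\<in>Ps. if pat l k P x = b then 1 else 0) = W" using finPs by (simp add: card_filter_sum)
  qed
  also have "\<dots> = card C * card B * W" by simp
  finally have eq: "(\<Sum>P\<in>Ps. card {x\<in>C. pat l k P x \<in> B}) = card C * card B * W" .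
  have "(\<Sum>P\<in>Ps. card {x\<in>C. pat l k P x \<in> B}) \<le> (\<Sum>P\<in>Ps. At)"
    by (rule sum_mono) (use per_P[OF C(2,3) B(2,3) n m] in \<open>simp add: Ps_def At_def\<close>)
  also have "\<dots> = m^n * At" by (simp add: Ps_def card_PiE)
  finally have ineq: "card C * card B * W \<le> m^n * At" using eq by simp
  define q where "q = real w ^ v * real (m - w) ^ (l - v)"
  have q: "0 < q" unfolding q_def using assms(4) wm by simp
  have "real W = real w^(v*k) * real(m-w)^((l-v)*k)" unfolding W_def by (simp add: mult.commute)
  hence W: "real W = q^k" by (simp add: q_def power_mult power_mult_distrib)
  have M: "real m ^ n = (real m ^ l)^k" unfolding n by (simp add: power_mult[symmetric] mult.commute)
  have ineqR: "real (card C) * real (card B) * q^k \<le> (real m ^ l)^k * real At"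
    using ineq W M by (metis of_nat_mult of_nat_le_iff of_nat_power)
  have a0: "0 < real (card B)" using alpha by simp
  have "real (card C) \<le> ((real m ^ l)^k * real At) / (real (card B) * q^k)"
    using ineqR a0 q by (simp add: pos_le_divide_eq mult.commute mult.left_commute)
  also have "\<dots> = (1 / real (card B)) * (real m ^ l / q) ^ k * real At"
    by (simp add: power_divide)
  finally show ?thesis using C(1) B(1) by (simp add: k_def At_def q_def)
qed
end
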